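(* Let $S_{p/q}=\{\mathrm{span}(n) : n\in\mathbb{N}\}\subseteq\mathbb{R}$. (i) If $p<2q$, then $S_{p/q}$ is dense in the interval $[0,\ \rho(M_0)]$. (ii) If $p>2q$, then $S_{p/q}$ is nowhere dense in $\mathbb{R}$.
   Context: Let $p>q>1$ be coprime integers, $A_p=\{0,\dots,p-1\}$, $A_q=\{0,\dots,q-1\}$. For $n\in\mathbb{N}$ and $a\in\mathbb{Z}$, let $\tau(n,a)=\frac{np+a}{q}$, defined only when $q$ divides $np+a$. Let $\mathcal{T}_{p/q}$ be the deterministic automaton with state set $\mathbb{N}$, alphabet $A_p$, initial state $0$, and transitions $n\xrightarrow{a}\tau(n,a)$ for $a\in A_p$ with $\tau(n,a)$ defined. Every state $n$ has exactly one outgoing transition labelled by a letter of $A_q$ and exactly one labelled by a letter of $\{p-q,\dots,p-1\}$; the minimal word $\mu_n$ (resp. maximal word $M_n$) is the unique infinite word over $A_q$ (resp. over $\{p-q,\dots,p-1\}$) labelling a path of $\mathcal{T}_{p/q}$ starting at state $n$. For an infinite word $a_1a_2a_3\cdots$ of integers, its real value is $\rho(a_1a_2\cdots)=\sum_{i\ge 1} a_i\left(\frac{p}{q}\right)^{-i}$. The span of $n$ is $\mathrm{span}(n)=\rho(M_n)-\rho(\mu_n)$. *)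

theory Defs
  imports "HOL-Analysis.Analysis"
begin

definition tau_defined :: "nat \<Rightarrow> nat \<Rightarrow> nat \<Rightarrow> nat \<Rightarrow> bool" where
  "tau_defined p q n a \<longleftrightarrow> a < p \<and> q dvd (n * p + a)"

definition tau :: "nat \<Rightarrow> nat \<Rightarrow> nat \<Rightarrow> nat \<Rightarrow> nat" where
  "tau p q n a = (n * p + a) div q"

text \<open>Infinite words are sequences nat => nat, index 0 being the first letter a_1.
  The state reached after reading the first i letters of w from n:\<close>
fun run :: "nat \<Rightarrow> nat \<Rightarrow> nat \<Rightarrow> (nat \<Rightarrow> nat) \<Rightarrow> nat \<Rightarrow> nat" where
  "run p q n w 0 = n"
| "run p q n w (Suc i) = tau p q (run p q n w i) (w i)"

definition labels_path :: "nat \<Rightarrow> nat \<Rightarrow> nat \<Rightarrow> (nat \<Rightarrow> nat) \<Rightarrow> bool" where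
  "labels_path p q n w \<longleftrightarrow> (\<forall>i. tau_defined p q (run p q n w i) (w i))"

definition min_word :: "nat \<Rightarrow> nat \<Rightarrow> nat \<Rightarrow> (nat \<Rightarrow> nat)" where
  "min_word p q n = (THE w. (\<forall>i. w i < q) \<and> labels_path p q n w)"

definition max_word :: "nat \<Rightarrow> nat \<Rightarrow> nat \<Rightarrow> (nat \<Rightarrow> nat)" where
  "max_word p q n = (THE w. (\<forall>i. p - q \<le> w i \<and> w i < p) \<and> labels_path p q n w)"

definition rho :: "nat \<Rightarrow> nat \<Rightarrow> (nat \<Rightarrow> nat) \<Rightarrow> real" where
  "rho p q w = (\<Sum>i. real (w i) * (real q / real p) ^ (Suc i))"

definition span :: "nat \<Rightarrow> nat \<Rightarrow> nat \<Rightarrow> real" where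
  "span p q n = rho p q (max_word p q n) - rho p q (min_word p q n)"

end

theory Submission
  imports Defs
begin

locale pq =
  fixes p q :: nat
  assumes q1: "q > 1" and pq: "p > q" and cop: "coprime p q"
begin

definition ce :: "nat \<Rightarrow> nat" where "ce x = (x*p + q - 1) div q"
definition fl :: "nat \<Rightarrow> nat" where "fl x = (x*p) div q"

lemma q0: "q > 0" using q1 by simp

lemma ce_lo: "x*p \<le> ce x * q" and ce_hi: "ce x * q < x*p + q"
proof -
  let ?N = "x*p + q - 1"
  have a: "?N div q * q + ?N mod q = ?N" by (rule div_mult_mod_eq)
  have b: "?N mod q < q" using q0 by simp
  have c: "?N = x*p + (q - 1)" using q1 by simp
  show "x*p \<le> ce x * q" unfolding ce_def using a b c by linarith
  show "ce x * q < x*p + q" unfolding ce_def using a b c q1 by linarith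
qed

lemma fl_lo: "fl x * q \<le> x*p" and fl_hi: "x*p < fl x * q + q"
proof -
  have a: "(x*p) div q * q + (x*p) mod q = x*p" by (rule div_mult_mod_eq)
  have b: "(x*p) mod q < q" using q0 by simp
  show "fl x * q \<le> x*p" unfolding fl_def using a by linarith
  show "x*p < fl x * q + q" unfolding fl_def using a b by linarith
qed

lemma ce_char: assumes "x*p \<le> t*q" "t*q < x*p + q" shows "ce x = t"
proof -
  have a: "x*p \<le> ce x * q" "ce x * q < x*p + q" using ce_lo ce_hi by auto
  have "t*q < ce x * q + q" using a assms by linarith
  hence "t * q < (ce x + 1) * q" by (simp add: algebra_simps)
  hence "t < ce x + 1" by (rule mult_less_cancel2[THEN iffD1, THEN conjunct2])
  moreover have "ce x * q < t * q + q" using a assms by linarith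
  hence "ce x * q < (t + 1) * q" by (simp add: algebra_simps)
  hence "ce x < t + 1" by (rule mult_less_cancel2[THEN iffD1, THEN conjunct2])
  ultimately show ?thesis by simp
qed

lemma fl_char: assumes "t*q \<le> x*p" "x*p < t*q + q" shows "fl x = t"
proof -
  have a: "fl x * q \<le> x*p" "x*p < fl x * q + q" using fl_lo fl_hi by auto
  have "t*q < fl x * q + q" using a assms by linarith
  hence "t * q < (fl x + 1) * q" by (simp add: algebra_simps)
  hence "t < fl x + 1" by (rule mult_less_cancel2[THEN iffD1, THEN conjunct2])
  moreover have "fl x * q < t * q + q" using a assms by linarith
  hence "fl x * q < (t + 1) * q" by (simp add: algebra_simps)
  hence "fl x < t + 1" by (rule mult_less_cancel2[THEN iffD1, THEN conjunct2])
  ultimately show ?thesis by simp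
qed

lemma ce_add_q: "ce (x + q * j) = ce x + p * j"
proof (rule ce_char)
  show "(x + q * j) * p \<le> (ce x + p * j) * q" using ce_lo[of x] by (simp add: algebra_simps)
  show "(ce x + p * j) * q < (x + q * j) * p + q" using ce_hi[of x] by (simp add: algebra_simps)
qed

lemma ce_mono: assumes "x \<le> y" shows "ce x \<le> ce y"
proof -
  have "x*p \<le> y*p" using assms by simp
  hence "x*p + q - 1 \<le> y*p + q - 1" by (meson add_le_mono1 diff_le_mono)
  thus ?thesis unfolding ce_def by (rule div_le_mono)
qed

lemma fl_mono: "x \<le> y \<Longrightarrow> fl x \<le> fl y"
  unfolding fl_def by (simp add: div_le_mono)

lemma fl_le_ce: "fl x \<le> ce x"
proof -
  have "x*p \<le> x*p + q - 1" using q1 by simp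
  thus ?thesis unfolding ce_def fl_def by (rule div_le_mono)
qed

lemma ce_le_fl1: "ce x \<le> fl x + 1"
proof -
  have "ce x * q < (fl x + 2) * q" using ce_hi[of x] fl_hi[of x] by (simp add: algebra_simps)
  hence "ce x < fl x + 2" by (rule mult_less_cancel2[THEN iffD1, THEN conjunct2])
  thus ?thesis by simp
qed

lemma ce_ge: "x \<le> ce x"
proof -
  have "x*q \<le> x*p" using pq by simp
  also have "\<dots> \<le> ce x * q" by (rule ce_lo)
  finally show ?thesis using q0 by simp
qed

lemma ce_0[simp]: "ce 0 = 0" unfolding ce_def using q1 by simp

definition mm :: "nat \<Rightarrow> nat \<Rightarrow> nat" where "mm k n = (ce ^^ k) n"

lemma mm_0[simp]: "mm 0 n = n" unfolding mm_def by simp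
lemma mm_Suc[simp]: "mm (Suc k) n = ce (mm k n)" unfolding mm_def by simp
lemma mm_ge: "n \<le> mm k n"
proof (induction k)
  case (Suc k)
  show ?case using Suc ce_ge[of "mm k n"] by simp
qed simp
lemma mm_mono: "n \<le> n' \<Longrightarrow> mm k n \<le> mm k n'"
  by (induction k) (simp_all add: ce_mono)

definition dmin :: "nat \<Rightarrow> nat" where "dmin x = ce x * q - x * p"
definition minw :: "nat \<Rightarrow> nat \<Rightarrow> nat" where "minw n i = dmin (mm i n)"

lemma dmin_eq: "x * p + dmin x = ce x * q"
  unfolding dmin_def using ce_lo[of x] by simp
lemma dmin_lt: "dmin x < q"
  unfolding dmin_def using ce_hi[of x] ce_lo[of x] by linarith

lemma run_minw: "run p q n (minw n) i = mm i n"
  by (induction i) (simp_all add: tau_def minw_def dmin_eq q0)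

lemma minw_path: "labels_path p q n (minw n)"
  unfolding labels_path_def tau_defined_def run_minw
proof
  fix i
  have "minw n i < p" using dmin_lt[of "mm i n"] pq unfolding minw_def by linarith
  moreover have "q dvd mm i n * p + minw n i" unfolding minw_def dmin_eq by simp
  ultimately show "minw n i < p \<and> q dvd mm i n * p + minw n i" by blast
qed

lemma path_dvd: assumes "labels_path p q n w" shows "q dvd run p q n w i * p + w i"
  using assms unfolding labels_path_def tau_defined_def by blast

lemma dvd_ce: assumes "a < q" "q dvd x * p + a" shows "x * p + a = ce x * q"
proof -
  obtain t where "x * p + a = q * t" using assms(2) by (rule dvdE)
  hence t: "x * p + a = t * q" by (simp add: mult.commute)
  have "ce x = t" by (rule ce_char) (use t assms(1) in auto)
  thus ?thesis using t by simp
qed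

lemma minw_unique: assumes "\<forall>i. w i < q" "labels_path p q n w" shows "w = minw n"
proof -
  have "run p q n w i = mm i n \<and> w i = minw n i" for i
  proof (induction i)
    case 0
    have "q dvd n * p + w 0" using path_dvd[OF assms(2), of 0] by simp
    hence "n * p + w 0 = ce n * q" using assms(1) dvd_ce by blast
    thus ?case using dmin_eq[of n] by (simp add: minw_def)
  next
    case (Suc i)
    let ?x = "mm i n"
    have e1: "w i = minw n i" "run p q n w i = ?x" using Suc by auto
    have "q dvd ?x * p + w i" using path_dvd[OF assms(2), of i] e1 by simp
    hence e2: "?x * p + w i = ce ?x * q" using assms(1) dvd_ce by blast
    have r: "run p q n w (Suc i) = mm (Suc i) n"
      using e1 e2 q0 by (simp add: tau_def)
    have "q dvd mm (Suc i) n * p + w (Suc i)" using path_dvd[OF assms(2), of "Suc i"] r by simp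
    hence "mm (Suc i) n * p + w (Suc i) = ce (mm (Suc i) n) * q" using assms(1) dvd_ce by blast
    hence "w (Suc i) = minw n (Suc i)" using dmin_eq[of "mm (Suc i) n"] by (simp add: minw_def)
    thus ?case using r by simp
  qed
  thus ?thesis by auto
qed

lemma min_word_eq: "min_word p q n = minw n"
  unfolding min_word_def
proof (rule the_equality)
  show "(\<forall>i. minw n i < q) \<and> labels_path p q n (minw n)"
    using dmin_lt minw_path by (simp add: minw_def)
qed (use minw_unique in blast)

definition dmax :: "nat \<Rightarrow> nat" where "dmax y = (ce (y+1) - 1) * q - y * p"
definition maxw :: "nat \<Rightarrow> nat \<Rightarrow> nat" where "maxw n i = dmax (mm i (n+1) - 1)"

lemma ce_pos: "ce (y+1) \<ge> 1"
  using ce_ge[of "y+1"] by simp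

lemma ce_split: "ce (y+1) * q = (ce (y+1) - 1) * q + q"
proof -
  have "ce (y+1) = (ce (y+1) - 1) + 1" using ce_pos[of y] by simp
  hence "ce (y+1) * q = ((ce (y+1) - 1) + 1) * q" by simp
  thus ?thesis by (simp add: algebra_simps)
qed

lemma dmax_eq: "y * p + dmax y = (ce (y+1) - 1) * q"
proof -
  have a: "(y+1)*p \<le> ce (y+1) * q" by (rule ce_lo)
  have c: "ce (y+1) * q = (ce (y+1) - 1) * q + q" by (rule ce_split)
  have "y*p + p \<le> (ce (y+1) - 1) * q + q" using a c by (simp add: algebra_simps)
  hence "y*p \<le> (ce (y+1) - 1) * q" using pq by linarith
  thus ?thesis unfolding dmax_def by simp
qed

lemma dmax_bounds: "p - q \<le> dmax y" "dmax y < p"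
proof -
  have a: "(y+1)*p \<le> ce (y+1) * q" by (rule ce_lo)
  have b: "ce (y+1) * q < (y+1)*p + q" by (rule ce_hi)
  have c: "ce (y+1) * q = (ce (y+1) - 1) * q + q" by (rule ce_split)
  have d: "y * p + dmax y = (ce (y+1) - 1) * q" by (rule dmax_eq)
  show "p - q \<le> dmax y" using a c d by (simp add: algebra_simps)
  show "dmax y < p" using b c d by (simp add: algebra_simps)
qed

lemma mm_pos: "mm i (n+1) \<ge> 1" using mm_ge[of "n+1" i] by simp

lemma run_maxw: "run p q n (maxw n) i = mm i (n+1) - 1"
proof (induction i)
  case (Suc i)
  let ?y = "mm i (n+1) - 1"
  have y1: "?y + 1 = mm i (n+1)" using mm_pos[of i n] by simp
  have "run p q n (maxw n) (Suc i) = tau p q ?y (maxw n i)" using Suc.IH by simp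
  also have "\<dots> = (?y * p + dmax ?y) div q" by (simp add: tau_def maxw_def)
  also have "\<dots> = ce (?y + 1) - 1" using dmax_eq[of ?y] q0 by simp
  also have "\<dots> = mm (Suc i) (n+1) - 1" using y1 by simp
  finally show ?case .
qed simp

lemma maxw_path: "labels_path p q n (maxw n)"
  unfolding labels_path_def tau_defined_def run_maxw
proof
  fix i
  have "maxw n i < p" using dmax_bounds(2) unfolding maxw_def by blast
  moreover have "q dvd (mm i (n+1) - 1) * p + maxw n i" unfolding maxw_def dmax_eq by simp
  ultimately show "maxw n i < p \<and> q dvd (mm i (n+1) - 1) * p + maxw n i" by blast
qed

lemma dvd_cemax: assumes "p - q \<le> a" "a < p" "q dvd x * p + a"
  shows "x * p + a = (ce (x+1) - 1) * q"
proof -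
  obtain t where "x * p + a = q * t" using assms(3) by (rule dvdE)
  hence t: "x * p + a = t * q" by (simp add: mult.commute)
  have "ce (x+1) = t + 1" by (rule ce_char) (use t assms(1,2) pq in \<open>auto simp: algebra_simps\<close>)
  thus ?thesis using t by simp
qed

lemma maxw_unique: assumes "\<forall>i. p - q \<le> w i \<and> w i < p" "labels_path p q n w" shows "w = maxw n"
proof -
  have "run p q n w i = mm i (n+1) - 1 \<and> w i = maxw n i" for i
  proof (induction i)
    case 0
    have "q dvd n * p + w 0" using path_dvd[OF assms(2), of 0] by simp
    hence "n * p + w 0 = (ce (n+1) - 1) * q" using assms(1) dvd_cemax by blast
    thus ?case using dmax_eq[of n] by (simp add: maxw_def)
  next
    case (Suc i)
    let ?x = "mm i (n+1) - 1"
    have y1: "?x + 1 = mm i (n+1)" using mm_pos[of i n] by simp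
    have e1: "w i = maxw n i" "run p q n w i = ?x" using Suc by auto
    have "q dvd ?x * p + w i" using path_dvd[OF assms(2), of i] e1 by simp
    hence e2: "?x * p + w i = (ce (?x+1) - 1) * q" using assms(1) dvd_cemax by blast
    have r: "run p q n w (Suc i) = mm (Suc i) (n+1) - 1"
      using e1 e2 q0 y1 by (simp add: tau_def)
    have "q dvd (mm (Suc i) (n+1) - 1) * p + w (Suc i)" using path_dvd[OF assms(2), of "Suc i"] r by simp
    hence "(mm (Suc i) (n+1) - 1) * p + w (Suc i) = (ce ((mm (Suc i) (n+1) - 1)+1) - 1) * q" using assms(1) dvd_cemax by blast
    hence "w (Suc i) = maxw n (Suc i)" using dmax_eq[of "mm (Suc i) (n+1) - 1"] by (simp add: maxw_def)
    thus ?case using r by simp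
  qed
  thus ?thesis by auto
qed

lemma max_word_eq: "max_word p q n = maxw n"
  unfolding max_word_def
proof (rule the_equality)
  show "(\<forall>i. p - q \<le> maxw n i \<and> maxw n i < p) \<and> labels_path p q n (maxw n)"
    using dmax_bounds maxw_path by (simp add: maxw_def)
qed (use maxw_unique in blast)



definition r :: real where "r = real q / real p"

lemma r_pos: "0 < r" and r_lt1: "r < 1" and p_r: "real p * r = real q"
  unfolding r_def using q1 pq by auto

lemma p_r_pow: "real p * r ^ Suc k = real q * r ^ k"
  using p_r by (simp add: algebra_simps)

lemma path_step: assumes "labels_path p q n w"
  shows "real (run p q n w (Suc i)) * real q = real (run p q n w i) * real p + real (w i)"
proof -
  have "q dvd run p q n w i * p + w i" by (rule path_dvd[OF assms])
  hence "(run p q n w i * p + w i) div q * q = run p q n w i * p + w i" by simp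
  hence "run p q n w (Suc i) * q = run p q n w i * p + w i" by (simp add: tau_def)
  thus ?thesis by (metis of_nat_add of_nat_mult)
qed

lemma path_rho: assumes "labels_path p q n w"
  shows "(\<lambda>k. real (run p q n w k) * r ^ k) \<longlonglongrightarrow> rho p q w / real q + real n"
proof -
  let ?x = "\<lambda>k. real (run p q n w k)"
  have part: "(\<Sum>i<k. real (w i) * r ^ Suc i) = real q * (?x k * r ^ k - real n)" for k
  proof (induction k)
    case (Suc k)
    have "real (w k) = ?x (Suc k) * real q - ?x k * real p" using path_step[OF assms, of k] by simp
    hence "real (w k) * r ^ Suc k = (?x (Suc k) * real q - ?x k * real p) * r ^ Suc k" by (simp only:)
    also have "\<dots> = real q * (?x (Suc k) * r ^ Suc k) - ?x k * (real p * r ^ Suc k)"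
      by (simp add: algebra_simps del: run.simps)
    also have "\<dots> = real q * (?x (Suc k) * r ^ Suc k) - real q * (?x k * r ^ k)"
      by (simp add: p_r_pow p_r del: run.simps)
    finally have wk: "real (w k) * r ^ Suc k = real q * (?x (Suc k) * r ^ Suc k) - real q * (?x k * r ^ k)" .
    have "(\<Sum>i<Suc k. real (w i) * r ^ Suc i) = (\<Sum>i<k. real (w i) * r ^ Suc i) + real (w k) * r ^ Suc k"
      by (rule sum.lessThan_Suc)
    also have "\<dots> = real q * (?x k * r ^ k - real n) + (real q * (?x (Suc k) * r ^ Suc k) - real q * (?x k * r ^ k))"
      unfolding Suc.IH wk ..
    also have "\<dots> = real q * (?x (Suc k) * r ^ Suc k - real n)" by (simp add: algebra_simps del: run.simps)
    finally show ?case .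
  qed simp
  have wp: "w i < p" for i using assms unfolding labels_path_def tau_defined_def by blast
  have summ: "summable (\<lambda>i. real (w i) * r ^ Suc i)"
  proof (rule summable_comparison_test')
    show "summable (\<lambda>i. real p * r * r ^ i)"
      by (intro summable_mult summable_geometric) (use r_pos r_lt1 in auto)
    fix i :: nat
    have "real (w i) \<le> real p" using wp[of i] by simp
    hence "real (w i) * r ^ Suc i \<le> real p * r ^ Suc i"
      by (intro mult_right_mono) (use r_pos in auto)
    thus "norm (real (w i) * r ^ Suc i) \<le> real p * r * r ^ i" using r_pos by simp
  qed
  have rho_eq: "rho p q w = (\<Sum>i. real (w i) * r ^ Suc i)" unfolding rho_def r_def ..
  have "(\<lambda>k. real q * (?x k * r ^ k - real n)) \<longlonglongrightarrow> rho p q w"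
    using summable_LIMSEQ[OF summ] unfolding part rho_eq .
  hence "(\<lambda>k. real q * (?x k * r ^ k - real n) / real q + real n) \<longlonglongrightarrow> rho p q w / real q + real n"
    by (intro tendsto_intros) (use q0 in auto)
  moreover have "(\<lambda>k. real q * (?x k * r ^ k - real n) / real q + real n) = (\<lambda>k. ?x k * r ^ k)"
    using q0 by (simp add: fun_eq_iff)
  ultimately show ?thesis by simp
qed

definition Dn :: "nat \<Rightarrow> nat \<Rightarrow> nat" where "Dn n k = mm k (n+1) - mm k n"

lemma lim_min: "(\<lambda>k. real (mm k n) * r ^ k) \<longlonglongrightarrow> rho p q (min_word p q n) / real q + real n"
  using path_rho[OF minw_path, of n] unfolding run_minw min_word_eq .

lemma lim_max: "(\<lambda>k. (real (mm k (n+1)) - 1) * r ^ k) \<longlonglongrightarrow> rho p q (max_word p q n) / real q + real n"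
proof -
  have "(\<lambda>k. real (mm k (n+1) - 1) * r ^ k) \<longlonglongrightarrow> rho p q (max_word p q n) / real q + real n"
    using path_rho[OF maxw_path, of n] unfolding run_maxw max_word_eq .
  moreover have "real (mm k (n+1) - 1) = real (mm k (n+1)) - 1" for k using mm_pos[of k n] by simp
  ultimately show ?thesis by simp
qed

lemma lim_span: "(\<lambda>k. real (Dn n k) * r ^ k) \<longlonglongrightarrow> span p q n / real q"
proof -
  have "(\<lambda>k. (real (mm k (n+1)) - 1) * r ^ k - real (mm k n) * r ^ k + r ^ k) \<longlonglongrightarrow>
      (rho p q (max_word p q n) / real q + real n) - (rho p q (min_word p q n) / real q + real n) + 0"
    by (intro tendsto_intros lim_max lim_min LIMSEQ_power_zero) (use r_pos r_lt1 in auto)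
  moreover have "(rho p q (max_word p q n) / real q + real n) - (rho p q (min_word p q n) / real q + real n) + 0
      = span p q n / real q" unfolding span_def by (simp add: diff_divide_distrib)
  moreover have "real (Dn n k) * r ^ k = (real (mm k (n+1)) - 1) * r ^ k - real (mm k n) * r ^ k + r ^ k" for k
    using mm_mono[of n "n+1" k] unfolding Dn_def by (simp add: algebra_simps of_nat_diff)
  ultimately show ?thesis by simp
qed

lemma lim_M0: "(\<lambda>k. real (mm k 1) * r ^ k) \<longlonglongrightarrow> rho p q (max_word p q 0) / real q"
proof -
  have "(\<lambda>k. (real (mm k (0+1)) - 1) * r ^ k + r ^ k) \<longlonglongrightarrow> (rho p q (max_word p q 0) / real q + real 0) + 0"
    by (intro tendsto_intros lim_max LIMSEQ_power_zero) (use r_pos r_lt1 in auto)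
  thus ?thesis by (simp add: algebra_simps)
qed



definition stepok :: "(nat \<Rightarrow> nat) \<Rightarrow> bool" where
  "stepok c \<longleftrightarrow> (\<forall>k. c (Suc k) = fl (c k) \<or> c (Suc k) = ce (c k))"

lemma ce_diff: "ce (x + d) - ce x = fl d \<or> ce (x + d) - ce x = ce d"
proof -
  have a1: "ce (x + d) * q < (ce x + ce d + 1) * q"
    using ce_hi[of "x+d"] ce_lo[of x] ce_lo[of d] by (simp add: algebra_simps)
  have "ce (x + d) < ce x + ce d + 1" by (rule mult_less_cancel2[THEN iffD1, THEN conjunct2, OF a1])
  hence b1: "ce (x + d) \<le> ce x + ce d" by simp
  have a2: "(ce x + fl d) * q < (ce (x + d) + 1) * q"
    using ce_hi[of x] fl_lo[of d] ce_lo[of "x+d"] by (simp add: algebra_simps)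
  have "ce x + fl d < ce (x + d) + 1" by (rule mult_less_cancel2[THEN iffD1, THEN conjunct2, OF a2])
  hence b2: "ce x + fl d \<le> ce (x + d)" by simp
  have "ce d \<le> fl d + 1" by (rule ce_le_fl1)
  thus ?thesis using b1 b2 by linarith
qed

lemma Dn_0[simp]: "Dn n 0 = 1" unfolding Dn_def by simp

lemma mm_Dn: "mm k (n+1) = mm k n + Dn n k"
  unfolding Dn_def using mm_mono[of n "n+1" k] by simp

lemma Dn_Suc: "Dn n (Suc k) = ce (mm k n + Dn n k) - ce (mm k n)"
  unfolding Dn_def[of n "Suc k"] using mm_Dn[of k n] by simp

lemma Dn_stepok: "stepok (Dn n)"
  unfolding stepok_def Dn_Suc using ce_diff by blast

lemma step_bound: assumes "c' = fl c \<or> c' = ce c"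
  shows "\<bar>real c' * r ^ Suc k - real c * r ^ k\<bar> \<le> r ^ Suc k"
proof -
  have b: "\<bar>real c' * real q - real c * real p\<bar> \<le> real q"
  proof (cases "c' = fl c")
    case True
    have "real (fl c) * real q \<le> real c * real p" using fl_lo[of c] by (metis of_nat_le_iff of_nat_mult)
    moreover have "real c * real p < real (fl c) * real q + real q" using fl_hi[of c]
      by (metis of_nat_add of_nat_less_iff of_nat_mult)
    ultimately show ?thesis unfolding True by linarith
  next
    case False
    hence F: "c' = ce c" using assms by blast
    have "real c * real p \<le> real (ce c) * real q" using ce_lo[of c] by (metis of_nat_le_iff of_nat_mult)
    moreover have "real (ce c) * real q < real c * real p + real q" using ce_hi[of c]
      by (metis of_nat_add of_nat_less_iff of_nat_mult)
    ultimately show ?thesis unfolding F by linarith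
  qed
  have e: "real c * r ^ k = real c * real p * r ^ Suc k / real q"
  proof -
    have "real c * real p * r ^ Suc k / real q = real c * (real p * r ^ Suc k) / real q" by simp
    also have "\<dots> = real c * (real q * r ^ k) / real q" by (simp only: p_r_pow)
    also have "\<dots> = real c * r ^ k" using q0 by simp
    finally show ?thesis by simp
  qed
  have "real c' * r ^ Suc k - real c * r ^ k = (real c' * real q - real c * real p) * r ^ Suc k / real q"
    unfolding e using q0 by (simp add: field_simps)
  hence "\<bar>real c' * r ^ Suc k - real c * r ^ k\<bar> = \<bar>real c' * real q - real c * real p\<bar> * r ^ Suc k / real q"
    using r_pos by (simp add: abs_mult)
  also have "\<dots> \<le> real q * r ^ Suc k / real q"
    using b r_pos q0 by (intro divide_right_mono mult_right_mono) auto
  also have "\<dots> = r ^ Suc k" using q0 by simp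
  finally show ?thesis .
qed

lemma stepok_bound: "stepok c \<Longrightarrow> \<bar>real (c (Suc k)) * r ^ Suc k - real (c k) * r ^ k\<bar> \<le> r ^ Suc k"
  unfolding stepok_def using step_bound by blast

definition \<delta> :: real where "\<delta> = r / (1 - r)"

lemma delta_pos: "\<delta> > 0" unfolding \<delta>_def using r_pos r_lt1 by simp

lemma tail: assumes L: "a \<longlonglongrightarrow> L" and st: "\<And>k. \<bar>a (Suc k) - a k\<bar> \<le> r ^ Suc k"
  shows "\<bar>L - a K\<bar> \<le> \<delta> * r ^ K"
proof -
  have i: "\<bar>a (K + j) - a K\<bar> \<le> r ^ Suc K * (1 - r ^ j) / (1 - r)" for j
  proof (induction j)
    case (Suc j)
    have "\<bar>a (K + Suc j) - a K\<bar> \<le> \<bar>a (K + j) - a K\<bar> + r ^ Suc (K + j)"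
      using st[of "K + j"] by simp
    also have "\<dots> \<le> r ^ Suc K * (1 - r ^ j) / (1 - r) + r ^ Suc (K + j)" using Suc by simp
    also have "\<dots> = r ^ Suc K * ((1 - r ^ j) / (1 - r) + r ^ j)"
      by (simp add: power_add algebra_simps)
    also have "(1 - r ^ j) / (1 - r) + r ^ j = (1 - r ^ Suc j) / (1 - r)"
      using r_lt1 by (simp add: field_simps)
    also have "r ^ Suc K * ((1 - r ^ Suc j) / (1 - r)) = r ^ Suc K * (1 - r ^ Suc j) / (1 - r)" by simp
    finally show ?case .
  qed simp
  have j: "\<bar>a (j + K) - a K\<bar> \<le> \<delta> * r ^ K" for j
  proof -
    have "r ^ Suc K * (1 - r ^ j) / (1 - r) \<le> r ^ Suc K * 1 / (1 - r)"
      using r_pos r_lt1 by (intro divide_right_mono mult_left_mono) auto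
    also have "\<dots> = \<delta> * r ^ K" unfolding \<delta>_def by (simp add: field_simps)
    finally show ?thesis using i[of j] by (simp add: add.commute)
  qed
  have "(\<lambda>j. \<bar>a (j + K) - a K\<bar>) \<longlonglongrightarrow> \<bar>L - a K\<bar>"
    by (intro tendsto_intros LIMSEQ_ignore_initial_segment L)
  thus ?thesis using j by (intro LIMSEQ_le_const2) auto
qed

lemma conv: assumes st: "\<And>k. \<bar>a (Suc k) - a k\<bar> \<le> r ^ Suc k"
  shows "\<exists>L. a \<longlonglongrightarrow> L"
proof -
  have s: "summable (\<lambda>k. a (Suc k) - a k)"
  proof (rule summable_comparison_test')
    show "summable (\<lambda>i. r * r ^ i)"
      by (intro summable_mult summable_geometric) (use r_pos r_lt1 in auto)
    fix i :: nat show "norm (a (Suc i) - a i) \<le> r * r ^ i" using st[of i] by simp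
  qed
  have "(\<lambda>n. a n - a 0) \<longlonglongrightarrow> suminf (\<lambda>k. a (Suc k) - a k)"
    using summable_LIMSEQ[OF s] unfolding sum_lessThan_telescope .
  hence "(\<lambda>n. a n - a 0 + a 0) \<longlonglongrightarrow> suminf (\<lambda>k. a (Suc k) - a k) + a 0"
    by (intro tendsto_intros)
  thus ?thesis by auto
qed

lemma span_tail: "\<bar>span p q n / real q - real (Dn n K) * r ^ K\<bar> \<le> \<delta> * r ^ K"
  by (rule tail[OF lim_span]) (rule stepok_bound[OF Dn_stepok])

primrec Rs :: "nat \<Rightarrow> nat set" where
  "Rs 0 = {1}"
| "Rs (Suc k) = fl ` Rs k \<union> ce ` Rs k"

lemma Rs_fin: "finite (Rs k)" by (induction k) auto

lemma Rs_card: "card (Rs k) \<le> 2 ^ k"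
proof (induction k)
  case (Suc k)
  have "card (Rs (Suc k)) \<le> card (fl ` Rs k) + card (ce ` Rs k)" by (simp add: card_Un_le)
  also have "\<dots> \<le> card (Rs k) + card (Rs k)" by (intro add_mono card_image_le Rs_fin)
  finally show ?case using Suc by simp
qed simp

lemma Dn_Rs: "Dn n k \<in> Rs k"
proof (induction k)
  case (Suc k)
  have "Dn n (Suc k) = fl (Dn n k) \<or> Dn n (Suc k) = ce (Dn n k)" using Dn_stepok[of n] unfolding stepok_def by blast
  thus ?case using Suc.IH by auto
qed simp

theorem part2: assumes "p > 2 * q" shows "interior (closure (range (span p q))) = {}"
proof (rule ccontr)
  assume "interior (closure (range (span p q))) \<noteq> {}"
  then obtain x where "x \<in> interior (closure (range (span p q)))" by blast
  then obtain e where e: "e > 0" "ball x e \<subseteq> closure (range (span p q))" unfolding mem_interior by blast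
  have r2: "2 * r < 1" using assms q0 unfolding r_def by (simp add: field_simps)
  define U where "U K = (\<Union>c\<in>Rs K. {real q * (real c * r ^ K - \<delta> * r ^ K) .. real q * (real c * r ^ K + \<delta> * r ^ K)})" for K
  have Ucomp: "compact (U K)" for K unfolding U_def by (intro compact_UN Rs_fin) auto
  have "span p q n \<in> U K" for n K
  proof -
    have "\<bar>span p q n - real q * (real (Dn n K) * r ^ K)\<bar> \<le> real q * (\<delta> * r ^ K)"
    proof -
      have "span p q n - real q * (real (Dn n K) * r ^ K) = real q * (span p q n / real q - real (Dn n K) * r ^ K)"
        using q0 by (simp add: field_simps)
      hence "\<bar>span p q n - real q * (real (Dn n K) * r ^ K)\<bar> = real q * \<bar>span p q n / real q - real (Dn n K) * r ^ K\<bar>"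
        by (simp add: abs_mult)
      also have "\<dots> \<le> real q * (\<delta> * r ^ K)" using span_tail by (intro mult_left_mono) auto
      finally show ?thesis .
    qed
    hence "span p q n \<in> {real q * (real (Dn n K) * r ^ K - \<delta> * r ^ K) .. real q * (real (Dn n K) * r ^ K + \<delta> * r ^ K)}"
      by (simp add: algebra_simps abs_le_iff)
    thus ?thesis unfolding U_def using Dn_Rs by blast
  qed
  hence sub: "ball x e \<subseteq> U K" for K using e(2) closure_minimal[of "range (span p q)" "U K"] Ucomp compact_imp_closed
    by blast
  have "(\<lambda>K. (2 * r) ^ K) \<longlonglongrightarrow> 0" using r2 r_pos by (intro LIMSEQ_power_zero) auto
  moreover have "0 < e / (real q * \<delta>)" using e q0 delta_pos by simp
  ultimately have "eventually (\<lambda>K. (2 * r) ^ K < e / (real q * \<delta>)) sequentially"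
    by (rule order_tendstoD(2))
  then obtain K where K: "(2 * r) ^ K < e / (real q * \<delta>)" by (auto simp: eventually_sequentially)
  have "2 * e = measure lborel (ball x e)" using e by (simp add: ball_eq_greaterThanLessThan)
  also have "\<dots> \<le> measure lborel (U K)"
    by (rule measure_mono_fmeasurable[OF sub]) (auto intro: fmeasurable_compact Ucomp)
  also have "\<dots> \<le> (\<Sum>c\<in>Rs K. measure lborel {real q * (real c * r ^ K - \<delta> * r ^ K) .. real q * (real c * r ^ K + \<delta> * r ^ K)})"
    unfolding U_def by (rule measure_UNION_le[OF Rs_fin]) auto
  also have "\<dots> = (\<Sum>c\<in>Rs K. 2 * real q * \<delta> * r ^ K)"
  proof (rule sum.cong)
    fix c assume "c \<in> Rs K"
    have "real q * (real c * r ^ K - \<delta> * r ^ K) \<le> real q * (real c * r ^ K + \<delta> * r ^ K)"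
      using delta_pos r_pos q0 by (intro mult_left_mono) auto
    thus "measure lborel {real q * (real c * r ^ K - \<delta> * r ^ K) .. real q * (real c * r ^ K + \<delta> * r ^ K)} = 2 * real q * \<delta> * r ^ K"
      by (simp add: algebra_simps)
  qed simp
  also have "\<dots> = real (card (Rs K)) * (2 * real q * \<delta> * r ^ K)" by simp
  also have "\<dots> \<le> 2 ^ K * (2 * real q * \<delta> * r ^ K)"
    using Rs_card[of K] delta_pos r_pos q0 by (intro mult_right_mono) (auto simp: of_nat_le_iff[symmetric])
  also have "\<dots> = 2 * (real q * \<delta>) * (2 * r) ^ K" by (simp add: power_mult_distrib)
  also have "\<dots> < 2 * (real q * \<delta>) * (e / (real q * \<delta>))"
    using K delta_pos q0 by (intro mult_strict_left_mono) auto
  also have "\<dots> = 2 * e" using delta_pos q0 by simp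
  finally show False by simp
qed



definition fln :: "nat \<Rightarrow> nat \<Rightarrow> nat" where "fln k c = (fl ^^ k) c"
lemma fln_0[simp]: "fln 0 c = c" unfolding fln_def by simp
lemma fln_Suc[simp]: "fln (Suc k) c = fl (fln k c)" unfolding fln_def by simp
lemma fln_Suc': "fln k (fl c) = fln (Suc k) c" unfolding fln_def funpow_Suc_right by simp
lemma mm_Suc': "mm k (ce c) = mm (Suc k) c" unfolding mm_def funpow_Suc_right by simp

definition Mn :: "nat \<Rightarrow> real" where "Mn c = lim (\<lambda>k. real (fln k c) * r ^ k)"
definition Mx :: "nat \<Rightarrow> real" where "Mx c = lim (\<lambda>k. real (mm k c) * r ^ k)"

lemma fln_step: "\<bar>real (fln (Suc k) c) * r ^ Suc k - real (fln k c) * r ^ k\<bar> \<le> r ^ Suc k"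
  by (rule step_bound) simp
lemma mm_step: "\<bar>real (mm (Suc k) c) * r ^ Suc k - real (mm k c) * r ^ k\<bar> \<le> r ^ Suc k"
  by (rule step_bound) simp

lemma Mn_lim: "(\<lambda>k. real (fln k c) * r ^ k) \<longlonglongrightarrow> Mn c"
proof -
  obtain L where "(\<lambda>k. real (fln k c) * r ^ k) \<longlonglongrightarrow> L" using conv[of "\<lambda>k. real (fln k c) * r ^ k"] fln_step by blast
  thus ?thesis unfolding Mn_def using convergentI convergent_LIMSEQ_iff by blast
qed

lemma Mx_lim: "(\<lambda>k. real (mm k c) * r ^ k) \<longlonglongrightarrow> Mx c"
proof -
  obtain L where "(\<lambda>k. real (mm k c) * r ^ k) \<longlonglongrightarrow> L" using conv[of "\<lambda>k. real (mm k c) * r ^ k"] mm_step by blast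
  thus ?thesis unfolding Mx_def using convergentI convergent_LIMSEQ_iff by blast
qed

lemma Mn_rec: "Mn c = r * Mn (fl c)"
proof -
  have "(\<lambda>k. real (fln (Suc k) c) * r ^ Suc k / r) \<longlonglongrightarrow> Mn c / r"
    using LIMSEQ_Suc[OF Mn_lim[of c]] by (intro tendsto_intros) (use r_pos in auto)
  moreover have "(\<lambda>k. real (fln (Suc k) c) * r ^ Suc k / r) = (\<lambda>k. real (fln k (fl c)) * r ^ k)"
    using r_pos by (simp add: fun_eq_iff fln_Suc')
  ultimately have "Mn (fl c) = Mn c / r" using LIMSEQ_unique[OF Mn_lim[of "fl c"]] by simp
  thus ?thesis using r_pos by simp
qed

lemma Mx_rec: "Mx c = r * Mx (ce c)"
proof -
  have "(\<lambda>k. real (mm (Suc k) c) * r ^ Suc k / r) \<longlonglongrightarrow> Mx c / r"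
    using LIMSEQ_Suc[OF Mx_lim[of c]] by (intro tendsto_intros) (use r_pos in auto)
  moreover have "(\<lambda>k. real (mm (Suc k) c) * r ^ Suc k / r) = (\<lambda>k. real (mm k (ce c)) * r ^ k)"
    using r_pos by (simp add: fun_eq_iff mm_Suc' del: mm_Suc)
  ultimately have "Mx (ce c) = Mx c / r" using LIMSEQ_unique[OF Mx_lim[of "ce c"]] by simp
  thus ?thesis using r_pos by simp
qed

lemma Mn_near: "\<bar>Mn c - real c\<bar> \<le> \<delta>"
  using tail[OF Mn_lim[of c] fln_step, of 0] by simp
lemma Mx_near: "\<bar>Mx c - real c\<bar> \<le> \<delta>"
  using tail[OF Mx_lim[of c] mm_step, of 0] by simp

context
  assumes small: "p < 2 * q"
begin

lemma fl1: "fl 1 = 1"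
  by (rule fl_char) (use small pq in auto)

lemma Mn1: "Mn 1 = 0"
proof -
  have "fln k 1 = 1" for k
  proof (induction k)
    case (Suc k) thus ?case using fl1 by (simp del: One_nat_def)
  qed simp
  hence "(\<lambda>k. real (fln k 1) * r ^ k) = (\<lambda>k. r ^ k)" by simp
  moreover have "(\<lambda>k. r ^ k) \<longlonglongrightarrow> 0" using r_pos r_lt1 by (intro LIMSEQ_power_zero) auto
  ultimately show ?thesis using LIMSEQ_unique[OF Mn_lim[of 1]] by simp
qed

lemma fl_ce_small: "fl (u + 1) \<le> ce u + 1"
proof -
  have "fl (u+1) * q \<le> (u+1) * p" by (rule fl_lo)
  also have "\<dots> < u * p + 2 * q" using small by simp
  also have "\<dots> \<le> ce u * q + 2 * q" using ce_lo[of u] by simp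
  finally have "fl (u+1) * q < (ce u + 2) * q" by (simp add: algebra_simps)
  hence "fl (u+1) < ce u + 2" by (rule mult_less_cancel2[THEN iffD1, THEN conjunct2])
  thus ?thesis by simp
qed

lemma Mn_Mx: "Mn (d + 1) \<le> Mx d"
proof -
  have le: "fln k (d+1) \<le> mm k d + 1" for k
  proof (induction k)
    case (Suc k)
    have "fl (fln k (d+1)) \<le> fl (mm k d + 1)" by (rule fl_mono[OF Suc])
    also have "\<dots> \<le> ce (mm k d) + 1" by (rule fl_ce_small)
    finally show ?case by simp
  qed simp
  have "(\<lambda>k. real (mm k d) * r ^ k + r ^ k) \<longlonglongrightarrow> Mx d + 0"
    by (intro tendsto_intros Mx_lim LIMSEQ_power_zero) (use r_pos r_lt1 in auto)
  moreover have "real (fln k (d+1)) * r ^ k \<le> real (mm k d) * r ^ k + r ^ k" for k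
  proof -
    have "real (fln k (d+1)) \<le> real (mm k d) + 1" using le[of k] by linarith
    hence "real (fln k (d+1)) * r ^ k \<le> (real (mm k d) + 1) * r ^ k"
      using r_pos by (intro mult_right_mono) auto
    thus ?thesis by (simp add: algebra_simps)
  qed
  ultimately show ?thesis using LIMSEQ_le[OF Mn_lim[of "d+1"]] by fastforce
qed

primrec cs :: "real \<Rightarrow> nat \<Rightarrow> nat" where
  "cs z 0 = 1"
| "cs z (Suc k) = (if ce (cs z k) = fl (cs z k) then fl (cs z k)
     else if z / r ^ Suc k \<le> Mx (fl (cs z k)) then fl (cs z k) else fl (cs z k) + 1)"

lemma ce_ne: "ce c \<noteq> fl c \<Longrightarrow> ce c = fl c + 1"
  using ce_le_fl1[of c] fl_le_ce[of c] by linarith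

lemma cs_stepok: "stepok (cs z)"
  unfolding stepok_def using ce_ne by auto

lemma cs_inv: assumes "0 \<le> z" "z \<le> Mx 1"
  shows "Mn (cs z k) \<le> z / r ^ k \<and> z / r ^ k \<le> Mx (cs z k)"
proof (induction k)
  case 0 thus ?case using assms Mn1 by simp
next
  case (Suc k)
  let ?c = "cs z k"
  let ?y = "z / r ^ k"
  have y': "z / r ^ Suc k = ?y / r" by simp
  have a: "Mn (fl ?c) \<le> z / r ^ Suc k"
    using Suc Mn_rec[of ?c] r_pos unfolding y' by (simp add: field_simps)
  have b: "z / r ^ Suc k \<le> Mx (ce ?c)"
    using Suc Mx_rec[of ?c] r_pos unfolding y' by (simp add: field_simps)
  show ?case
  proof (cases "ce ?c = fl ?c")
    case True thus ?thesis using a b by simp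
  next
    case False
    note ce = ce_ne[OF False]
    show ?thesis
    proof (cases "z / r ^ Suc k \<le> Mx (fl ?c)")
      case True thus ?thesis using a False by simp
    next
      case F2: False
      have "Mn (fl ?c + 1) \<le> z / r ^ Suc k" using Mn_Mx[of "fl ?c"] F2 by linarith
      thus ?thesis using b ce False F2 by simp
    qed
  qed
qed

lemma cs_near: assumes "0 \<le> z" "z \<le> Mx 1"
  shows "\<bar>z - real (cs z k) * r ^ k\<bar> \<le> \<delta> * r ^ k"
proof -
  have "\<bar>z / r ^ k - real (cs z k)\<bar> \<le> \<delta>"
    using cs_inv[OF assms, of k] Mn_near[of "cs z k"] Mx_near[of "cs z k"] by linarith
  hence "\<bar>z / r ^ k - real (cs z k)\<bar> * r ^ k \<le> \<delta> * r ^ k" using r_pos by (intro mult_right_mono) auto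
  moreover have "\<bar>z / r ^ k - real (cs z k)\<bar> * r ^ k = \<bar>z - real (cs z k) * r ^ k\<bar>"
  proof -
    have "\<bar>z / r ^ k - real (cs z k)\<bar> * r ^ k = \<bar>(z / r ^ k - real (cs z k)) * r ^ k\<bar>"
      using r_pos by (simp add: abs_mult)
    also have "(z / r ^ k - real (cs z k)) * r ^ k = z - real (cs z k) * r ^ k"
      using r_pos by (simp add: field_simps)
    finally show ?thesis .
  qed
  ultimately show ?thesis by simp
qed

end

lemma shift: "k \<le> K \<Longrightarrow> mm k (n + q ^ K * t) = mm k n + p ^ k * q ^ (K - k) * t"
proof (induction k)
  case (Suc k)
  have kk: "K - k = Suc (K - Suc k)" using Suc.prems by simp
  have ih: "mm k (n + q ^ K * t) = mm k n + p ^ k * q ^ (K - k) * t" using Suc by simp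
  have e1: "p ^ k * q ^ (K - k) * t = q * (p ^ k * q ^ (K - Suc k) * t)" unfolding kk by (simp add: ac_simps)
  have "mm (Suc k) (n + q ^ K * t) = ce (mm k n + q * (p ^ k * q ^ (K - Suc k) * t))"
    by (simp only: mm_Suc ih e1)
  also have "\<dots> = ce (mm k n) + p * (p ^ k * q ^ (K - Suc k) * t)" by (rule ce_add_q)
  also have "\<dots> = mm (Suc k) n + p ^ Suc k * q ^ (K - Suc k) * t" by (simp add: ac_simps)
  finally show ?case .
qed simp

lemma Dn_shift: "k \<le> K \<Longrightarrow> Dn (n + q ^ K * t) k = Dn n k"
proof -
  assume k: "k \<le> K"
  have "mm k (n + q ^ K * t + 1) = mm k (n+1) + p ^ k * q ^ (K - k) * t"
    using shift[OF k, of "n+1" t] by (simp add: algebra_simps)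
  moreover have "mm k (n + q ^ K * t) = mm k n + p ^ k * q ^ (K - k) * t" by (rule shift[OF k])
  ultimately show ?thesis unfolding Dn_def by simp
qed

lemma solve: "\<exists>t. q dvd y + p ^ K * t"
proof -
  have a: "p ^ K \<noteq> 0" using pq by simp
  have g: "gcd (p ^ K) q = 1" using cop by simp
  obtain u v where uv: "p ^ K * u = q * v + 1" using bezout_nat[OF a, of q] g by auto
  define Y where "Y = y div q"
  define m where "m = y mod q"
  have yeq: "y = q * Y + m" unfolding Y_def m_def by simp
  have ym: "m < q" unfolding m_def using q0 by simp
  define X where "X = q - m"
  have mX: "m + X = q" unfolding X_def using ym by simp
  have "p ^ K * (u * X) = (q * v + 1) * X" by (simp only: mult.assoc[symmetric] uv)
  hence "y + p ^ K * (u * X) = q * Y + (m + X) + q * (v * X)" unfolding yeq by (simp add: algebra_simps)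
  also have "\<dots> = q * (Y + 1 + v * X)" unfolding mX by (simp add: algebra_simps)
  finally have "q dvd y + p ^ K * (u * X)" by simp
  thus ?thesis by blast
qed

lemma ce_diff0: "q dvd x \<Longrightarrow> ce (x + d) - ce x = ce d"
proof -
  assume "q dvd x"
  then obtain s where s: "x = q * s" by (rule dvdE)
  have "ce (d + q * s) = ce d + p * s" by (rule ce_add_q)
  moreover have "ce (0 + q * s) = ce 0 + p * s" by (rule ce_add_q)
  ultimately show ?thesis using s by (simp add: add.commute)
qed

lemma ce_difffl: "q dvd x + d \<Longrightarrow> ce (x + d) - ce x = fl d"
proof -
  assume "q dvd x + d"
  then obtain s where s: "x + d = q * s" by (rule dvdE)
  have cs: "ce (x + d) = p * s" using ce_add_q[of 0 s] s by simp
  have xd: "x * p + d * p = p * s * q" using s by (metis add_mult_distrib mult.commute mult.left_commute)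
  have h1: "ce x * q < x * p + q" by (rule ce_hi)
  have h2: "fl d * q \<le> d * p" by (rule fl_lo)
  have h3: "x * p \<le> ce x * q" by (rule ce_lo)
  have h4: "d * p < fl d * q + q" by (rule fl_hi)
  have "(ce x + fl d) * q < (p * s + 1) * q"
    unfolding add_mult_distrib using h1 h2 xd by simp
  hence l1: "ce x + fl d < p * s + 1" by (rule mult_less_cancel2[THEN iffD1, THEN conjunct2])
  have "p * s * q < (ce x + fl d + 1) * q"
    unfolding add_mult_distrib using h3 h4 xd by simp
  hence l2: "p * s < ce x + fl d + 1" by (rule mult_less_cancel2[THEN iffD1, THEN conjunct2])
  show ?thesis using l1 l2 cs by simp
qed

lemma realize: assumes st: "stepok c" and c0: "c 0 = 1"
  shows "\<exists>n. \<forall>k\<le>K. Dn n k = c k"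
proof (induction K)
  case 0
  have "\<forall>k\<le>0. Dn 0 k = c k" using c0 by simp
  thus ?case by blast
next
  case (Suc K)
  then obtain n where n: "\<forall>k\<le>K. Dn n k = c k" by blast
  let ?x = "mm K n"
  let ?d = "c K"
  define e where "e = (if c (Suc K) = ce ?d then 0 else ?d)"
  obtain t where t: "q dvd ?x + e + p ^ K * t" using solve by blast
  define n' where "n' = n + q ^ K * t"
  have a: "\<forall>k\<le>K. Dn n' k = c k" using n Dn_shift unfolding n'_def by simp
  have x': "mm K n' = ?x + p ^ K * t" using shift[of K K n t] unfolding n'_def by simp
  have "Dn n' (Suc K) = ce (mm K n' + ?d) - ce (mm K n')" using Dn_Suc[of n' K] a by simp
  also have "\<dots> = c (Suc K)"
  proof (cases "c (Suc K) = ce ?d")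
    case True
    hence "e = 0" unfolding e_def by simp
    hence "mm K n' = ?x + e + p ^ K * t" using x' by linarith
    hence "q dvd mm K n'" using t by simp
    thus ?thesis using ce_diff0 True by simp
  next
    case False
    hence f: "c (Suc K) = fl ?d" using st unfolding stepok_def by blast
    have "e = ?d" using False unfolding e_def by simp
    hence "mm K n' + ?d = ?x + e + p ^ K * t" using x' by linarith
    hence "q dvd mm K n' + ?d" using t by simp
    thus ?thesis using ce_difffl f by simp
  qed
  finally have "Dn n' (Suc K) = c (Suc K)" .
  hence "\<forall>k\<le>Suc K. Dn n' k = c k" using a by (simp add: le_Suc_eq)
  thus ?case by blast
qed

theorem part1: assumes small: "p < 2 * q"
  shows "{0 .. rho p q (max_word p q 0)} \<subseteq> closure (range (span p q))"
proof
  fix y assume y: "y \<in> {0 .. rho p q (max_word p q 0)}"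
  define z where "z = y / real q"
  have Mx1: "Mx 1 = rho p q (max_word p q 0) / real q" using LIMSEQ_unique[OF Mx_lim[of 1] lim_M0] .
  have y0: "0 \<le> y" "y \<le> rho p q (max_word p q 0)" using y by auto
  have z0: "0 \<le> z" "z \<le> Mx 1" unfolding z_def Mx1
    using y0 q0 by (simp_all add: divide_right_mono)
  show "y \<in> closure (range (span p q))"
    unfolding closure_approachable
  proof (intro allI impI)
    fix e :: real assume e: "e > 0"
    have "(\<lambda>K. r ^ K) \<longlonglongrightarrow> 0" using r_pos r_lt1 by (intro LIMSEQ_power_zero) auto
    moreover have "0 < e / (2 * real q * \<delta>)" using e q0 delta_pos by simp
    ultimately have "eventually (\<lambda>K. r ^ K < e / (2 * real q * \<delta>)) sequentially"
      by (rule order_tendstoD(2))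
    then obtain K where K: "r ^ K < e / (2 * real q * \<delta>)" by (auto simp: eventually_sequentially)
    obtain n where n: "\<forall>k\<le>K. Dn n k = cs z k"
      using realize[OF cs_stepok[OF small, of z] cs.simps(1)[OF small], of K] by blast
    have t1: "\<bar>span p q n / real q - real (cs z K) * r ^ K\<bar> \<le> \<delta> * r ^ K"
      using span_tail[of n K] n by simp
    have t2: "\<bar>z - real (cs z K) * r ^ K\<bar> \<le> \<delta> * r ^ K" by (rule cs_near[OF small z0])
    have "\<bar>span p q n / real q - z\<bar> \<le> 2 * \<delta> * r ^ K" using t1 t2 by linarith
    hence "real q * \<bar>span p q n / real q - z\<bar> \<le> real q * (2 * \<delta> * r ^ K)"
      using q0 by (intro mult_left_mono) auto
    moreover have "real q * \<bar>span p q n / real q - z\<bar> = \<bar>span p q n - y\<bar>"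
    proof -
      have "real q * \<bar>span p q n / real q - z\<bar> = \<bar>real q * (span p q n / real q - z)\<bar>"
        by (simp add: abs_mult)
      also have "real q * (span p q n / real q - z) = span p q n - y"
        unfolding z_def using q0 by (simp add: field_simps)
      finally show ?thesis .
    qed
    moreover have "real q * (2 * \<delta> * r ^ K) < e"
    proof -
      have "real q * (2 * \<delta> * r ^ K) = (2 * real q * \<delta>) * r ^ K" by simp
      also have "\<dots> < (2 * real q * \<delta>) * (e / (2 * real q * \<delta>))"
        using K q0 delta_pos by (intro mult_strict_left_mono) auto
      also have "\<dots> = e" using q0 delta_pos by simp
      finally show ?thesis .
    qed
    ultimately have "dist (span p q n) y < e" by (simp add: dist_real_def)
    thus "\<exists>x'\<in>range (span p q). dist x' y < e" by blast
  qed
qed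


end

theorem mainTheorem10:
  fixes p q :: nat
  assumes "q > 1" and "p > q" and "coprime p q"
  shows "(p < 2 * q \<longrightarrow>
            {0 .. rho p q (max_word p q 0)} \<subseteq> closure (range (span p q)))
       \<and> (p > 2 * q \<longrightarrow> interior (closure (range (span p q))) = {})"
proof -
  interpret pq p q using assms by unfold_locales
  show ?thesis using part1 part2 by blast
qed

end
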